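(* Consider any step of Reverse SeqPAV at which the current set of not-yet-removed alternatives is $S$, and let $N'\subseteq N$ with $z=\sum_{i\in N'}|A_i\cap S|>0$. Suppose that at this step Reverse SeqPAV removes alternative $a\in S$ and that $z'=\sum_{i\in N'}|A_i\cap(S\setminus\{a\})|<z$. Then for every $b\in S$, $w_{\mathrm{PAV}}(S)-w_{\mathrm{PAV}}(S\setminus\{b\})\ge\frac{(z-z')^2}{z}$.
   Context: Let $N=[n]$ be a finite set of voters and $A$ a finite set of $m$ alternatives; a profile $P=(A_1,\dots,A_n)$ gives each voter $i$ a non-empty approval set $A_i\subseteq A$. For $S\subseteq A$, $w_{\mathrm{PAV}}(S)=\sum_{i\in N}\sum_{j=1}^{|A_i\cap S|}\frac1j$. Reverse SeqPAV builds a ranking from the bottom: it starts with $S=A$ and the empty ranking, and at each step picks $a\in S$ minimizing $w_{\mathrm{PAV}}(S)-w_{\mathrm{PAV}}(S\setminus\{a\})$ (ties broken arbitrarily), removes $a$ from $S$ and prepends it to the ranking, until $S$ is empty. *)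

theory Defs
  imports Main "HOL-Library.Multiset" Complex_Main
begin

text \<open>Voters N, approval function Ap (voter i approves Ap i), alternatives A.\<close>

definition w_pav :: "'v set \<Rightarrow> ('v \<Rightarrow> 'a set) \<Rightarrow> 'a set \<Rightarrow> real" where
  "w_pav N Ap S = (\<Sum>i\<in>N. \<Sum>j=1..card (Ap i \<inter> S). 1 / real j)"

definition marg :: "'v set \<Rightarrow> ('v \<Rightarrow> 'a set) \<Rightarrow> 'a set \<Rightarrow> 'a \<Rightarrow> real" where
  "marg N Ap S a = w_pav N Ap S - w_pav N Ap (S - {a})"

definition rsp_removes :: "'v set \<Rightarrow> ('v \<Rightarrow> 'a set) \<Rightarrow> 'a set \<Rightarrow> 'a \<Rightarrow> bool" where
  "rsp_removes N Ap S a \<longleftrightarrow> a \<in> S \<and> (\<forall>c\<in>S. marg N Ap S a \<le> marg N Ap S c)"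

inductive rsp_reachable :: "'v set \<Rightarrow> ('v \<Rightarrow> 'a set) \<Rightarrow> 'a set \<Rightarrow> 'a set \<Rightarrow> bool"
  for N Ap A where
  start: "rsp_reachable N Ap A A"
| step: "rsp_reachable N Ap A S \<Longrightarrow> rsp_removes N Ap S a \<Longrightarrow> rsp_reachable N Ap A (S - {a})"

end

theory Submission
  imports Defs "HOL-Analysis.Convex"
begin

lemma harm_diff:
  fixes c :: nat assumes "c > 0"
  shows "(\<Sum>j=1..c. 1 / real j) - (\<Sum>j=1..c-1. 1 / real j) = 1 / real c"
proof -
  obtain d where d: "c = Suc d" using assms by (cases c) auto
  show ?thesis unfolding d by simp
qed

lemma card_minus_if:
  assumes "finite X"
  shows "card X = card (X - {a}) + (if a \<in> X then 1 else 0)"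
  using assms by (cases "a \<in> X") (simp_all add: card_Diff_singleton, metis Suc_pred card_gt_0_iff empty_iff)

theorem lemma1:
  fixes N N' :: "'v set" and Ap :: "'v \<Rightarrow> 'a set" and A S :: "'a set" and a b :: 'a
    and z z' :: nat
  assumes "finite N" and "finite A"
    and "\<forall>i\<in>N. Ap i \<noteq> {} \<and> Ap i \<subseteq> A"
    and "rsp_reachable N Ap A S"
    and "rsp_removes N Ap S a"
    and "N' \<subseteq> N"
    and "z = (\<Sum>i\<in>N'. card (Ap i \<inter> S))" and "z > 0"
    and "z' = (\<Sum>i\<in>N'. card (Ap i \<inter> (S - {a})))" and "z' < z"
    and "b \<in> S"
  shows "marg N Ap S b \<ge> (real z - real z')\<^sup>2 / real z"
proof -
  have aS: "a \<in> S" and amin: "marg N Ap S a \<le> marg N Ap S b"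
    using assms(5,11) unfolding rsp_removes_def by auto
  have finAp: "finite (Ap i \<inter> S)" if "i \<in> N" for i
    using assms(2,3) that by (meson finite_Int finite_subset)
  have finN': "finite N'" using assms(1,6) finite_subset by blast
  define c where "c i = card (Ap i \<inter> S)" for i
  define h where "h i = (\<Sum>j=1..card (Ap i \<inter> S). 1 / real j) - (\<Sum>j=1..card (Ap i \<inter> (S - {a})). 1 / real j)" for i
  have eqset: "Ap i \<inter> (S - {a}) = (Ap i \<inter> S) - {a}" for i by auto
  define K where "K = {i\<in>N'. a \<in> Ap i}"
  have finK: "finite K" using finN' K_def by auto
  have KN': "K \<subseteq> N'" using K_def by auto
  have margeq: "marg N Ap S a = (\<Sum>i\<in>N. h i)"
    unfolding marg_def w_pav_def h_def by (simp add: sum_subtractf)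
  have hnn: "h i \<ge> 0" if "i \<in> N" for i
  proof -
    have "card (Ap i \<inter> (S - {a})) \<le> card (Ap i \<inter> S)"
      using finAp[OF that] by (intro card_mono) auto
    then show ?thesis unfolding h_def
      by (intro diff_ge_0_iff_ge[THEN iffD2] sum_mono2) auto
  qed
  have cpos: "c i > 0" if "i \<in> K" for i
    using that aS finAp assms(6) unfolding K_def c_def by (auto simp: card_gt_0_iff)
  have hK: "h i = 1 / real (c i)" if "i \<in> K" for i
  proof -
    have i: "i \<in> N" "a \<in> Ap i \<inter> S" using that aS assms(6) K_def by auto
    have "card (Ap i \<inter> (S - {a})) = c i - 1"
      unfolding eqset c_def using i finAp[OF i(1)] by (simp add: card_Diff_singleton)
    then show ?thesis unfolding h_def c_def[symmetric] using harm_diff[OF cpos[OF that]] by simp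
  qed
  have "(\<Sum>i\<in>K. h i) \<le> (\<Sum>i\<in>N. h i)"
    using hnn KN' assms(6) assms(1) by (intro sum_mono2) auto
  hence m1: "(\<Sum>i\<in>K. 1 / real (c i)) \<le> marg N Ap S a"
    using hK margeq by simp
  have zz: "z = z' + card K"
  proof -
    have "z = (\<Sum>i\<in>N'. card (Ap i \<inter> (S - {a})) + (if a \<in> Ap i then 1 else 0))"
      unfolding assms(7)
    proof (intro sum.cong refl)
      fix i assume "i \<in> N'"
      hence f: "finite (Ap i \<inter> S)" using finAp assms(6) by auto
      show "card (Ap i \<inter> S) = card (Ap i \<inter> (S - {a})) + (if a \<in> Ap i then 1 else 0)"
        unfolding eqset using card_minus_if[OF f, of a] aS by auto
    qed
    also have "\<dots> = z' + (\<Sum>i\<in>N'. (if a \<in> Ap i then 1 else 0))"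
      unfolding assms(9) by (simp add: sum.distrib)
    also have "(\<Sum>i\<in>N'. (if a \<in> Ap i then 1 else 0)) = card K"
      unfolding K_def using finN' by (simp add: sum.If_cases Int_def)
    finally show ?thesis .
  qed
  have sumc: "(\<Sum>i\<in>K. real (c i)) \<le> real z"
  proof -
    have "(\<Sum>i\<in>K. c i) \<le> (\<Sum>i\<in>N'. c i)" using finN' KN' by (intro sum_mono2) auto
    then show ?thesis unfolding assms(7) c_def by (metis of_nat_le_iff of_nat_sum)
  qed
  have CS: "(real (card K))\<^sup>2 \<le> (\<Sum>i\<in>K. 1 / real (c i)) * (\<Sum>i\<in>K. real (c i))"
  proof -
    have "(\<Sum>i\<in>K. sqrt (1 / real (c i)) * sqrt (real (c i)))\<^sup>2 \<le>
      (\<Sum>i\<in>K. (sqrt (1 / real (c i)))\<^sup>2) * (\<Sum>i\<in>K. (sqrt (real (c i)))\<^sup>2)"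
      by (rule Cauchy_Schwarz_ineq_sum)
    moreover have "(\<Sum>i\<in>K. sqrt (1 / real (c i)) * sqrt (real (c i))) = real (card K)"
      using cpos by (simp add: real_sqrt_mult[symmetric] sum.cong[OF refl, where h="\<lambda>_. 1"])
    ultimately show ?thesis by simp
  qed
  have zpos: "real z > 0" using assms(8) by simp
  have "(real z - real z')\<^sup>2 / real z = (real (card K))\<^sup>2 / real z" using zz by simp
  also have "\<dots> \<le> (\<Sum>i\<in>K. 1 / real (c i)) * (\<Sum>i\<in>K. real (c i)) / real z"
    using CS zpos by (simp add: divide_right_mono)
  also have "\<dots> \<le> (\<Sum>i\<in>K. 1 / real (c i))"
  proof -
    have nn: "(\<Sum>i\<in>K. 1 / real (c i)) \<ge> 0" by (simp add: sum_nonneg)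
    have "(\<Sum>i\<in>K. 1 / real (c i)) * (\<Sum>i\<in>K. real (c i)) \<le> (\<Sum>i\<in>K. 1 / real (c i)) * real z"
      using mult_left_mono[OF sumc nn] .
    then show ?thesis using zpos by (simp add: divide_le_eq)
  qed
  also have "\<dots> \<le> marg N Ap S b" using m1 amin by simp
  finally show ?thesis .
qed

end
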